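(* Assume there is $\delta>0$ such that $\alpha\big(\{((p_i)_{i\in\mathbb N_0},h)\in\Omega: p_1=1\}\big)<1$ and $\alpha\big(\{((p_i)_{i\in\mathbb N_0},h)\in\Omega: p_0\le 1-\delta,\ h\in[\delta,1-\delta]\}\big)=1$, and assume $M<\infty$. Let $\varepsilon>0$ and $r,s\in\mathbb N$ with $r\le s$ and $\beta(\tfrac rs)-\varepsilon>0$, and let $N_0\in\mathbb N$ be such that for $\mathsf P$-a.e. $\omega$, $P_\omega\big(\liminf_{n\to\infty}\tfrac{1}{nsN_0}\log\eta_{nsN_0}(nrN_0)\ge\beta(\tfrac rs)-\varepsilon\big)>0$. Then there exists $\nu>0$ such that for $\mathsf P$-a.e. $\omega$ there is an increasing sequence $(x_l)_{l\in\mathbb N_0}=(x_l(\omega))_{l\in\mathbb N_0}$ in $\mathbb N_0$ such that for all $l\in\mathbb N_0$, $$P^{x_l}_\omega\Big(\liminf_{n\to\infty}\tfrac{1}{nsN_0}\log\eta_{nsN_0}(x_l+nrN_0)\ge\beta(\tfrac rs)-\varepsilon\Big)>\nu.$$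
   Context: Let $\mathcal M$ be the set of probability measures $(p_i)_{i\in\mathbb N_0}$ on $\mathbb N_0$ (offspring distributions) and $\Omega=\mathcal M\times(0,1]$. Let $\alpha$ be a probability measure on $\Omega$. A random environment $\omega=(\omega_x)_{x\in\mathbb N_0}=(\mu_x,h_x)_{x\in\mathbb N_0}$ is an i.i.d. sequence with law $\alpha$; write $\mathsf P=\alpha^{\otimes\mathbb N_0}$. Let $m_x=\sum_{k\ge0}k\,\mu_x(\{k\})$ and $M=\operatorname{ess\,sup} m_0$. Given $\omega$, the branching random walk in random environment on $\mathbb N_0$ evolves in discrete time as follows: at each time step every existing particle at a site $x$ produces offspring according to $\mu_x$, independently of all other particles, and dies; then every newly produced particle independently moves from $x$ to $x+1$ with probability $h_x$ and stays at $x$ with probability $1-h_x$. $P^x_\omega$ denotes the quenched law of the process started with one particle at $x$, $P_\omega=P^0_\omega$, and $\eta_n(y)$ is the number of particles at site $y$ at time $n$. Under the stated assumptions there is a unique deterministic continuous concave function $\beta:[0,1]\to\mathbb R$ such that for every $\gamma>0$, for $\mathsf P$-a.e. $\omega$, $\lim_{n\to\infty}\max_{x\in n[\gamma,1]\cap\mathbb N}\big|\tfrac1n\log E_\omega[\eta_n(x)]-\beta(\tfrac xn)\big|=0$; this is the function $\beta$ in the claim. Such an $N_0$ exists by a lemma of the paper. *)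

theory Defs
  imports "HOL-Probability.Probability"
begin

text \<open>Environment at a site: an offspring distribution (a pmf on the naturals) and a
  jump probability h.\<close>

type_synonym site_env = "nat pmf \<times> real"

definition offspring_M :: "nat pmf measure" where
  "offspring_M = vimage_algebra UNIV (\<lambda>\<mu>. pmf \<mu>) (Pi\<^sub>M UNIV (\<lambda>_::nat. (borel :: real measure)))"

definition site_M :: "site_env measure" where
  "site_M = offspring_M \<Otimes>\<^sub>M (borel :: real measure)"

definition env_law :: "site_env measure \<Rightarrow> (nat \<Rightarrow> site_env) measure" where
  "env_law \<alpha> = Pi\<^sub>M UNIV (\<lambda>_::nat. \<alpha>)"

definition mean_off :: "nat pmf \<Rightarrow> ennreal" where
  "mean_off \<mu> = (\<integral>\<^sup>+ k. ennreal (real k) \<partial>measure_pmf \<mu>)"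

text \<open>The randomness consists of
  K(t,y,j): number of offspring of the j-th particle at site y at time t, and
  B(t,y,j,i): whether its i-th child jumps to y+1 (True) or stays at y (False).\<close>
type_synonym randomness = "((nat \<times> nat \<times> nat) \<Rightarrow> nat) \<times> ((nat \<times> nat \<times> nat \<times> nat) \<Rightarrow> bool)"

primrec eta :: "nat \<Rightarrow> randomness \<Rightarrow> nat \<Rightarrow> nat \<Rightarrow> nat" where
  "eta x0 kb 0 = (\<lambda>y. if y = x0 then 1 else 0)"
| "eta x0 kb (Suc t) = (\<lambda>y.
      (\<Sum>j<eta x0 kb t y. card {i. i < fst kb (t, y, j) \<and> \<not> snd kb (t, y, j, i)})
    + (if y = 0 then 0 else
      (\<Sum>j<eta x0 kb t (y - 1). card {i. i < fst kb (t, y - 1, j) \<and> snd kb (t, y - 1, j, i)})))"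

definition rand_law :: "(nat \<Rightarrow> site_env) \<Rightarrow> randomness measure" where
  "rand_law \<omega> =
     (Pi\<^sub>M UNIV (\<lambda>k::nat \<times> nat \<times> nat. measure_pmf (fst (\<omega> (fst (snd k))))))
     \<Otimes>\<^sub>M (Pi\<^sub>M UNIV (\<lambda>k::nat \<times> nat \<times> nat \<times> nat. measure_pmf (bernoulli_pmf (snd (\<omega> (fst (snd k)))))))"

definition qprob :: "(nat \<Rightarrow> site_env) \<Rightarrow> nat \<Rightarrow> ((nat \<Rightarrow> nat \<Rightarrow> nat) \<Rightarrow> bool) \<Rightarrow> real" where
  "qprob \<omega> x E = measure (rand_law \<omega>) {kb \<in> space (rand_law \<omega>). E (eta x kb)}"

definition qmean :: "(nat \<Rightarrow> site_env) \<Rightarrow> nat \<Rightarrow> nat \<Rightarrow> ennreal" where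
  "qmean \<omega> n y = (\<integral>\<^sup>+ kb. ennreal (real (eta 0 kb n y)) \<partial>rand_law \<omega>)"

definition lg :: "nat \<Rightarrow> ereal" where
  "lg k = (if k = 0 then -\<infinity> else ereal (ln (real k)))"

definition is_beta :: "site_env measure \<Rightarrow> (real \<Rightarrow> real) \<Rightarrow> bool" where
  "is_beta \<alpha> \<beta> \<longleftrightarrow> continuous_on {0..1} \<beta> \<and> concave_on {0..1} \<beta> \<and>
     (\<forall>\<gamma>. 0 < \<gamma> \<and> \<gamma> \<le> 1 \<longrightarrow>
        (AE \<omega> in env_law \<alpha>.
          (\<lambda>n. Max {\<bar>ln (enn2real (qmean \<omega> n x)) / real n - \<beta> (real x / real n)\<bar>
                    | x::nat. \<gamma> * real n \<le> real x \<and> x \<le> n \<and> 0 < x}) \<longlonglongrightarrow> 0))"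

end

theory Submission
  imports Defs
begin


abbreviation RK :: "(nat \<times> nat \<times> nat \<Rightarrow> nat) measure" where
  "RK \<equiv> Pi\<^sub>M UNIV (\<lambda>_::nat \<times> nat \<times> nat. count_space (UNIV::nat set))"
abbreviation RB :: "(nat \<times> nat \<times> nat \<times> nat \<Rightarrow> bool) measure" where
  "RB \<equiv> Pi\<^sub>M UNIV (\<lambda>_::nat \<times> nat \<times> nat \<times> nat. count_space (UNIV::bool set))"
abbreviation RR :: "randomness measure" where
  "RR \<equiv> RK \<Otimes>\<^sub>M RB"

lemma add_meas:
  "f \<in> measurable M (count_space UNIV) \<Longrightarrow> g \<in> measurable M (count_space UNIV) \<Longrightarrow> (\<lambda>x. (f x::nat) + g x) \<in> measurable M (count_space UNIV)"
  by measurable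

lemma sum_meas:
  fixes c :: "nat \<Rightarrow> 'a \<Rightarrow> nat" and n :: nat
  assumes "\<And>j. (\<lambda>kb. c j kb) \<in> measurable M (count_space (UNIV::nat set))"
  shows "(\<lambda>kb. \<Sum>j<n. c j kb) \<in> measurable M (count_space UNIV)"
proof (induction n)
  case 0 then show ?case by simp
next
  case (Suc n)
  have "(\<lambda>kb. (\<Sum>j<n. c j kb) + c n kb) \<in> measurable M (count_space UNIV)"
    using Suc assms[of n] by measurable
  then show ?case by simp
qed

lemma sum_meas_var:
  fixes c :: "nat \<Rightarrow> 'a \<Rightarrow> nat"
  assumes "\<And>j. (\<lambda>kb. c j kb) \<in> measurable M (count_space (UNIV::nat set))"
    and "g \<in> measurable M (count_space UNIV)"
  shows "(\<lambda>kb. \<Sum>j<g kb. c j kb) \<in> measurable M (count_space UNIV)"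
  using measurable_compose_countable[where f="\<lambda>n kb. \<Sum>j<n. c j kb", OF sum_meas[OF assms(1)] assms(2)] .

lemma card_meas:
  "(\<lambda>kb. card {i. i < fst kb (t, y, j) \<and> P (snd kb (t, y, j, i))}) \<in> measurable RR (count_space UNIV)"
proof -
  have eq: "card {i. i < m \<and> Q i} = (\<Sum>i<m. if Q i then 1 else 0)" for m and Q :: "nat \<Rightarrow> bool"
  proof -
    have "{i. i < m \<and> Q i} = {..<m} \<inter> {i. Q i}" by auto
    then show ?thesis by (simp add: sum.If_cases)
  qed
  have a: "(\<lambda>kb::randomness. \<Sum>i<m. if P (snd kb (t, y, j, i)) then 1 else (0::nat)) \<in> measurable RR (count_space UNIV)" for m
    by (rule sum_meas) measurable
  have "(\<lambda>kb. (\<lambda>m kb. \<Sum>i<m. if P (snd kb (t, y, j, i)) then 1 else (0::nat)) (fst kb (t,y,j)) kb) \<in> measurable RR (count_space UNIV)"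
    by (rule measurable_compose_countable[OF a]) measurable
  then show ?thesis by (simp add: eq)
qed

lemma eta_meas: "(\<lambda>kb. eta x kb t y) \<in> measurable RR (count_space UNIV)"
proof (induction t arbitrary: y)
  case 0 then show ?case by simp
next
  case (Suc t)
  have A: "(\<lambda>kb. \<Sum>j<eta x kb t y. card {i. i < fst kb (t, y, j) \<and> \<not> snd kb (t, y, j, i)}) \<in> measurable RR (count_space UNIV)"
    by (rule sum_meas_var[OF card_meas Suc])
  have B: "(\<lambda>kb. \<Sum>j<eta x kb t (y-1). card {i. i < fst kb (t, y-1, j) \<and> snd kb (t, y-1, j, i)}) \<in> measurable RR (count_space UNIV)"
    using sum_meas_var[OF card_meas[where P="\<lambda>b. b"] Suc] by simp
  show ?case
  proof (cases "y = 0")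
    case True then show ?thesis using A by (simp only: eta.simps True simp_thms(6) if_True add_0_right)
  next
    case False
    have "(\<lambda>kb. (\<Sum>j<eta x kb t y. card {i. i < fst kb (t, y, j) \<and> \<not> snd kb (t, y, j, i)}) + 
      (\<Sum>j<eta x kb t (y-1). card {i. i < fst kb (t, y-1, j) \<and> snd kb (t, y-1, j, i)})) \<in> measurable RR (count_space UNIV)"
      by (rule add_meas[OF A B])
    then show ?thesis using False by (simp only: eta.simps if_False)
  qed
qed



definition Tsh :: "nat \<Rightarrow> randomness \<Rightarrow> randomness" where
  "Tsh x kb = ((\<lambda>(t,y,j). fst kb (t, y + x, j)), (\<lambda>(t,y,j,i). snd kb (t, y + x, j, i)))"

lemma eta_shift_gen: "eta x kb t y = (if y < x then 0 else eta 0 (Tsh x kb) t (y - x))"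
proof (induction t arbitrary: y)
  case 0 then show ?case by auto
next
  case (Suc t)
  note IH = Suc
  show ?case
  proof (cases "y < x")
    case True
    have "eta x kb t y = 0" using IH[of y] True by simp
    moreover have "y \<noteq> 0 \<Longrightarrow> eta x kb t (y - 1) = 0" using IH[of "y-1"] True by simp
    ultimately show ?thesis using True by simp
  next
    case False
    define z where "z = y - x"
    have y: "y = z + x" using False z_def by simp
    have A: "(\<Sum>j<eta x kb t y. card {i. i < fst kb (t, y, j) \<and> \<not> snd kb (t, y, j, i)})
        = (\<Sum>j<eta 0 (Tsh x kb) t z. card {i. i < fst (Tsh x kb) (t, z, j) \<and> \<not> snd (Tsh x kb) (t, z, j, i)})"
      using IH[of y] False by (simp add: Tsh_def y)
    have B: "(if y = 0 then 0 else
      (\<Sum>j<eta x kb t (y - 1). card {i. i < fst kb (t, y - 1, j) \<and> snd kb (t, y - 1, j, i)}))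
      = (if z = 0 then 0 else
      (\<Sum>j<eta 0 (Tsh x kb) t (z - 1). card {i. i < fst (Tsh x kb) (t, z - 1, j) \<and> snd (Tsh x kb) (t, z - 1, j, i)}))"
    proof (cases "z = 0")
      case True
      then have "y = 0 \<or> eta x kb t (y - 1) = 0" using IH[of "y-1"] y by auto
      then show ?thesis using True by auto
    next
      case False
      then have "y - 1 = (z - 1) + x" "\<not> y - 1 < x" "y \<noteq> 0" using y by auto
      then show ?thesis using IH[of "y-1"] False by (simp add: Tsh_def)
    qed
    show ?thesis using A B False by (simp add: z_def)
  qed
qed

lemma eta_shift: "eta x kb t (x + y) = eta 0 (Tsh x kb) t y"
  using eta_shift_gen[of x kb t "x+y"] by simp



abbreviation Kl :: "(nat \<Rightarrow> site_env) \<Rightarrow> (nat \<times> nat \<times> nat \<Rightarrow> nat) measure" where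
  "Kl \<omega> \<equiv> Pi\<^sub>M UNIV (\<lambda>k::nat \<times> nat \<times> nat. measure_pmf (fst (\<omega> (fst (snd k)))))"
abbreviation Bl :: "(nat \<Rightarrow> site_env) \<Rightarrow> (nat \<times> nat \<times> nat \<times> nat \<Rightarrow> bool) measure" where
  "Bl \<omega> \<equiv> Pi\<^sub>M UNIV (\<lambda>k::nat \<times> nat \<times> nat \<times> nat. measure_pmf (bernoulli_pmf (snd (\<omega> (fst (snd k))))))"

lemma rand_law_eq: "rand_law \<omega> = Kl \<omega> \<Otimes>\<^sub>M Bl \<omega>" by (simp add: rand_law_def)

lemma sets_Kl: "sets (Kl \<omega>) = sets RK" by (rule sets_PiM_cong) auto
lemma sets_Bl: "sets (Bl \<omega>) = sets RB" by (rule sets_PiM_cong) auto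
lemma sets_rand_law: "sets (rand_law \<omega>) = sets RR"
  unfolding rand_law_eq by (rule sets_pair_measure_cong[OF sets_Kl sets_Bl])
lemma space_rand_law: "space (rand_law \<omega>) = UNIV"
  by (simp add: rand_law_eq space_pair_measure space_PiM)
lemma space_RR: "space RR = UNIV"
  by (simp add: space_pair_measure space_PiM)

lemma prob_Kl: "prob_space (Kl \<omega>)" by (intro prob_space_PiM) (simp add: prob_space_measure_pmf)
lemma prob_Bl: "prob_space (Bl \<omega>)" by (intro prob_space_PiM) (simp add: prob_space_measure_pmf)

definition shenv :: "nat \<Rightarrow> (nat \<Rightarrow> site_env) \<Rightarrow> (nat \<Rightarrow> site_env)" where
  "shenv x \<omega> = (\<lambda>n. \<omega> (n + x))"

lemma distr_Kl: "distr (Kl \<omega>) (Kl (shenv x \<omega>)) (\<lambda>a k. a (fst k, fst (snd k) + x, snd (snd k))) = Kl (shenv x \<omega>)"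
proof -
  let ?f = "\<lambda>k::nat\<times>nat\<times>nat. (fst k, fst (snd k) + x, snd (snd k))"
  have inj: "inj_on ?f UNIV" by (auto simp: inj_on_def)
  have A: "distr (Kl \<omega>) (\<Pi>\<^sub>M i\<in>UNIV. measure_pmf (fst (\<omega> (fst (snd (?f i)))))) (\<lambda>a. \<lambda>n\<in>UNIV. a (?f n))
       = (\<Pi>\<^sub>M i\<in>UNIV. measure_pmf (fst (\<omega> (fst (snd (?f i))))))"
    by (rule distr_PiM_reindex[OF _ inj]) (auto simp: prob_space_measure_pmf)
  have B: "(\<Pi>\<^sub>M i\<in>UNIV. measure_pmf (fst (\<omega> (fst (snd (?f i)))))) = Kl (shenv x \<omega>)"
    by (simp add: shenv_def)
  have C: "(\<lambda>a. \<lambda>n\<in>UNIV. a (?f n)) = (\<lambda>a k. a (fst k, fst (snd k) + x, snd (snd k)))"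
    by (auto simp: fun_eq_iff)
  show ?thesis using A unfolding B C .
qed

lemma distr_Bl: "distr (Bl \<omega>) (Bl (shenv x \<omega>)) (\<lambda>a k. a (fst k, fst (snd k) + x, snd (snd k))) = Bl (shenv x \<omega>)"
proof -
  let ?f = "\<lambda>k::nat\<times>nat\<times>nat\<times>nat. (fst k, fst (snd k) + x, snd (snd k))"
  have inj: "inj_on ?f UNIV" by (auto simp: inj_on_def)
  have A: "distr (Bl \<omega>) (\<Pi>\<^sub>M i\<in>UNIV. measure_pmf (bernoulli_pmf (snd (\<omega> (fst (snd (?f i))))))) (\<lambda>a. \<lambda>n\<in>UNIV. a (?f n))
       = (\<Pi>\<^sub>M i\<in>UNIV. measure_pmf (bernoulli_pmf (snd (\<omega> (fst (snd (?f i)))))))"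
    by (rule distr_PiM_reindex[OF _ inj]) (auto simp: prob_space_measure_pmf)
  have B: "(\<Pi>\<^sub>M i\<in>UNIV. measure_pmf (bernoulli_pmf (snd (\<omega> (fst (snd (?f i))))))) = Bl (shenv x \<omega>)"
    by (simp add: shenv_def)
  have C: "(\<lambda>a. \<lambda>n\<in>UNIV. a (?f n)) = (\<lambda>a k. a (fst k, fst (snd k) + x, snd (snd k)))"
    by (auto simp: fun_eq_iff)
  show ?thesis using A unfolding B C .
qed

lemma meas_Kl_sh: "(\<lambda>a k. a (fst k, fst (snd k) + x, snd (snd k))) \<in> measurable (Kl \<omega>) (Kl \<omega>')"
  unfolding measurable_cong_sets[OF sets_Kl sets_Kl]
  by (rule measurable_PiM_single'[where f="\<lambda>k a. a (fst k, fst (snd k) + x, snd (snd k))"]) (auto simp: space_PiM)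
lemma meas_Bl_sh: "(\<lambda>a k. a (fst k, fst (snd k) + x, snd (snd k))) \<in> measurable (Bl \<omega>) (Bl \<omega>')"
  unfolding measurable_cong_sets[OF sets_Bl sets_Bl]
  by (rule measurable_PiM_single'[where f="\<lambda>k a. a (fst k, fst (snd k) + x, snd (snd k))"]) (auto simp: space_PiM)

lemma distr_rand_law: "distr (rand_law \<omega>) (rand_law (shenv x \<omega>)) (Tsh x) = rand_law (shenv x \<omega>)"
proof -
  let ?fa = "\<lambda>(a::nat\<times>nat\<times>nat\<Rightarrow>nat) k. a (fst k, fst (snd k) + x, snd (snd k))"
  let ?fb = "\<lambda>(a::nat\<times>nat\<times>nat\<times>nat\<Rightarrow>bool) k. a (fst k, fst (snd k) + x, snd (snd k))"
  have T: "Tsh x = (\<lambda>(a, b). (?fa a, ?fb b))"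
    by (auto simp: Tsh_def fun_eq_iff split: prod.splits)
  interpret pb: prob_space "Bl (shenv x \<omega>)" by (rule prob_Bl)
  have sf: "sigma_finite_measure (distr (Bl \<omega>) (Bl (shenv x \<omega>)) ?fb)"
    unfolding distr_Bl by unfold_locales
  have A: "distr (Kl \<omega>) (Kl (shenv x \<omega>)) ?fa \<Otimes>\<^sub>M distr (Bl \<omega>) (Bl (shenv x \<omega>)) ?fb
     = distr (Kl \<omega> \<Otimes>\<^sub>M Bl \<omega>) (Kl (shenv x \<omega>) \<Otimes>\<^sub>M Bl (shenv x \<omega>)) (\<lambda>(a, b). (?fa a, ?fb b))"
    by (rule pair_measure_distr[OF meas_Kl_sh meas_Bl_sh sf])
  then show ?thesis
    unfolding rand_law_eq T distr_Kl distr_Bl by simp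
qed

lemma qprob_shift:
  assumes S: "{kb \<in> space RR. P (\<lambda>n. eta 0 kb (a n) (b n))} \<in> sets RR"
  shows "qprob \<omega> x (\<lambda>\<eta>. P (\<lambda>n. \<eta> (a n) (x + b n))) = qprob (shenv x \<omega>) 0 (\<lambda>\<eta>. P (\<lambda>n. \<eta> (a n) (b n)))"
proof -
  let ?S = "{kb. P (\<lambda>n. eta 0 kb (a n) (b n))}"
  have S': "?S \<in> sets (rand_law (shenv x \<omega>))" using S by (simp add: sets_rand_law space_RR)
  have T: "Tsh x = (\<lambda>p. ((\<lambda>a k. a (fst k, fst (snd k) + x, snd (snd k))) (fst p), (\<lambda>a k. a (fst k, fst (snd k) + x, snd (snd k))) (snd p)))"
    by (auto simp: Tsh_def fun_eq_iff split: prod.splits)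
  have m: "Tsh x \<in> measurable (rand_law \<omega>) (rand_law (shenv x \<omega>))"
    unfolding T rand_law_eq
    by (intro measurable_Pair measurable_compose[OF measurable_fst meas_Kl_sh] measurable_compose[OF measurable_snd meas_Bl_sh])
  have "qprob \<omega> x (\<lambda>\<eta>. P (\<lambda>n. \<eta> (a n) (x + b n))) = measure (rand_law \<omega>) (Tsh x -` ?S \<inter> space (rand_law \<omega>))"
    unfolding qprob_def by (simp add: space_rand_law eta_shift)
  also have "\<dots> = measure (distr (rand_law \<omega>) (rand_law (shenv x \<omega>)) (Tsh x)) ?S"
    by (rule measure_distr[OF m S', symmetric])
  also have "\<dots> = qprob (shenv x \<omega>) 0 (\<lambda>\<eta>. P (\<lambda>n. \<eta> (a n) (b n)))"
    unfolding distr_rand_law qprob_def by (simp add: space_rand_law)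
  finally show ?thesis .
qed



lemma event_meas:
  fixes c :: ereal and d :: "nat \<Rightarrow> real"
  shows "{kb \<in> space RR. c \<le> liminf (\<lambda>n. lg (eta 0 kb (a n) (b n)) / ereal (d n))} \<in> sets RR"
proof -
  have t: "(\<lambda>kb. lg (eta 0 kb (a n) (b n)) / ereal (d n)) \<in> borel_measurable RR" for n
    using measurable_compose[OF eta_meas, of "\<lambda>k. lg k / ereal (d n)" borel 0 "a n" "b n"]
    by simp
  have "(\<lambda>kb. liminf (\<lambda>n. lg (eta 0 kb (a n) (b n)) / ereal (d n))) \<in> borel_measurable RR"
    by (rule borel_measurable_liminf[OF t])
  then show ?thesis by measurable
qed



context begin
interpretation pmf_as_function .
lemma pmf_bern: "pmf (bernoulli_pmf h) b = (if b then min 1 (max 0 h) else 1 - min 1 (max 0 h))"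
  by transfer auto
end

lemma pmf_kernel:
  fixes F :: "'a \<Rightarrow> 'b::countable pmf"
  assumes "\<And>b. (\<lambda>x. pmf (F x) b) \<in> borel_measurable M"
  shows "(\<lambda>x. measure_pmf (F x)) \<in> measurable M (subprob_algebra (count_space UNIV))"
proof (rule measurable_subprob_algebra)
  fix x show "subprob_space (measure_pmf (F x))" by (rule prob_space_imp_subprob_space) (rule prob_space_measure_pmf)
next
  fix x show "sets (measure_pmf (F x)) = sets (count_space UNIV)" by simp
next
  fix A :: "'b set" assume "A \<in> sets (count_space UNIV)"
  have eq: "emeasure (measure_pmf (F x)) A = (\<integral>\<^sup>+ b. ennreal (pmf (F x) b) * indicator A b \<partial>count_space UNIV)" for x
    by (simp add: nn_integral_measure_pmf[symmetric] nn_integral_indicator)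
  have "(\<lambda>x. \<integral>\<^sup>+ b. ennreal (pmf (F x) b) * indicator A b \<partial>count_space UNIV) \<in> borel_measurable M"
  proof (rule sigma_finite_measure.borel_measurable_nn_integral)
    show "sigma_finite_measure (count_space (UNIV::'b set))"
      by (rule sigma_finite_measure_count_space_countable) simp
    have "(\<lambda>p. (\<lambda>b p. ennreal (pmf (F (fst p)) b) * indicator A b) (snd p) p) \<in> borel_measurable (M \<Otimes>\<^sub>M count_space UNIV)"
    proof (rule measurable_compose_countable)
      fix b
      have "(\<lambda>x. pmf (F x) b) \<in> borel_measurable M" by (rule assms)
      then show "(\<lambda>p. ennreal (pmf (F (fst p)) b) * indicator A b) \<in> borel_measurable (M \<Otimes>\<^sub>M count_space UNIV)"
        by measurable
    qed measurable
    then show "(\<lambda>(x, b). ennreal (pmf (F x) b) * indicator A b) \<in> borel_measurable (M \<Otimes>\<^sub>M count_space UNIV)"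
      by (simp add: case_prod_beta)
  qed
  then show "(\<lambda>x. emeasure (measure_pmf (F x)) A) \<in> borel_measurable M" by (simp add: eq)
qed



lemma KP: "(\<lambda>\<mu>. measure_pmf \<mu>) \<in> measurable offspring_M (subprob_algebra (count_space UNIV))"
proof (rule pmf_kernel[where F="\<lambda>\<mu>. \<mu>"])
  fix b :: nat
  have "(\<lambda>\<mu>. pmf \<mu>) \<in> measurable offspring_M (Pi\<^sub>M UNIV (\<lambda>_::nat. (borel :: real measure)))"
    unfolding offspring_M_def by (rule measurable_vimage_algebra1) (auto simp: space_PiM)
  then show "(\<lambda>\<mu>. pmf \<mu> b) \<in> borel_measurable offspring_M"
    by measurable
qed

lemma KB: "(\<lambda>h. measure_pmf (bernoulli_pmf h)) \<in> measurable (borel :: real measure) (subprob_algebra (count_space UNIV))"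
proof (rule pmf_kernel[where F="\<lambda>h. bernoulli_pmf h"])
  fix b :: bool
  show "(\<lambda>h. pmf (bernoulli_pmf h) b) \<in> borel_measurable borel"
    unfolding pmf_bern by measurable
qed

lemma PiM_kernel:
  fixes N :: "'i \<Rightarrow> 'a \<Rightarrow> 'b measure"
  assumes K: "\<And>i. i \<in> I \<Longrightarrow> (\<lambda>\<omega>. N i \<omega>) \<in> measurable M (subprob_algebra (C i))"
  and P: "\<And>i \<omega>. i \<in> I \<Longrightarrow> \<omega> \<in> space M \<Longrightarrow> prob_space (N i \<omega>)"
  shows "(\<lambda>\<omega>. Pi\<^sub>M I (\<lambda>i. N i \<omega>)) \<in> measurable M (subprob_algebra (Pi\<^sub>M I C))"
proof (rule measurable_subprob_algebra_generated[OF sets_PiM Int_stable_prod_algebra prod_algebra_sets_into_space])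
  have sets: "\<And>\<omega> i. \<omega> \<in> space M \<Longrightarrow> i \<in> I \<Longrightarrow> sets (N i \<omega>) = sets (C i)"
    using K by (rule sets_kernel)
  have spaces: "\<And>\<omega> i. \<omega> \<in> space M \<Longrightarrow> i \<in> I \<Longrightarrow> space (N i \<omega>) = space (C i)"
    using sets by (rule sets_eq_imp_space_eq)
  fix \<omega> assume \<omega>: "\<omega> \<in> space M"
  show "subprob_space (Pi\<^sub>M I (\<lambda>i. N i \<omega>))"
    by (rule prob_space_imp_subprob_space, rule prob_space_PiM) (rule P[OF _ \<omega>])
  show "sets (Pi\<^sub>M I (\<lambda>i. N i \<omega>)) = sets (Pi\<^sub>M I C)"
    by (rule sets_PiM_cong) (auto simp: sets \<omega>)
next
  have sets: "\<And>\<omega> i. \<omega> \<in> space M \<Longrightarrow> i \<in> I \<Longrightarrow> sets (N i \<omega>) = sets (C i)"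
    using K by (rule sets_kernel)
  have spaces: "\<And>\<omega> i. \<omega> \<in> space M \<Longrightarrow> i \<in> I \<Longrightarrow> space (N i \<omega>) = space (C i)"
    using sets by (rule sets_eq_imp_space_eq)
  fix A assume "A \<in> prod_algebra I C"
  then obtain J E where A: "A = prod_emb I C J (Pi\<^sub>E J E)" and J: "finite J" "J \<subseteq> I"
    and E: "\<And>i. i \<in> J \<Longrightarrow> E i \<in> sets (C i)"
    by (rule prod_algebraE) auto
  have eq: "emeasure (Pi\<^sub>M I (\<lambda>i. N i \<omega>)) A = (\<Prod>i\<in>J. emeasure (N i \<omega>) (E i))" if \<omega>: "\<omega> \<in> space M" for \<omega>
  proof -
    have e: "prod_emb I C J (Pi\<^sub>E J E) = prod_emb I (\<lambda>i. N i \<omega>) J (Pi\<^sub>E J E)"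
      unfolding prod_emb_def using spaces[OF \<omega>] by (auto simp: PiE_def Pi_def)
    show ?thesis unfolding A e
      by (rule emeasure_PiM_emb) (use J E sets[OF \<omega>] P[OF _ \<omega>] in auto)
  qed
  have "(\<lambda>\<omega>. \<Prod>i\<in>J. emeasure (N i \<omega>) (E i)) \<in> borel_measurable M"
  proof (rule borel_measurable_prod_ennreal)
    fix i assume "i \<in> J"
    then show "(\<lambda>\<omega>. emeasure (N i \<omega>) (E i)) \<in> borel_measurable M"
      using K[of i] E[of i] J by (auto intro: measurable_emeasure_kernel)
  qed
  then show "(\<lambda>\<omega>. emeasure (Pi\<^sub>M I (\<lambda>i. N i \<omega>)) A) \<in> borel_measurable M"
    by (rule measurable_cong[THEN iffD1, rotated]) (simp add: eq)
next
  have spaces: "\<And>\<omega> i. \<omega> \<in> space M \<Longrightarrow> i \<in> I \<Longrightarrow> space (N i \<omega>) = space (C i)"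
    using K by (intro sets_eq_imp_space_eq sets_kernel)
  have eq: "emeasure (Pi\<^sub>M I (\<lambda>i. N i \<omega>)) (\<Pi>\<^sub>E i\<in>I. space (C i)) = 1" if \<omega>: "\<omega> \<in> space M" for \<omega>
  proof -
    interpret prob_space "Pi\<^sub>M I (\<lambda>i. N i \<omega>)" by (rule prob_space_PiM) (rule P[OF _ \<omega>])
    have "(\<Pi>\<^sub>E i\<in>I. space (C i)) = space (Pi\<^sub>M I (\<lambda>i. N i \<omega>))"
      by (simp add: space_PiM spaces[OF \<omega>] cong: PiE_cong)
    then show ?thesis by (simp add: emeasure_space_1)
  qed
  show "(\<lambda>\<omega>. emeasure (Pi\<^sub>M I (\<lambda>i. N i \<omega>)) (\<Pi>\<^sub>E i\<in>I. space (C i))) \<in> borel_measurable M"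
  proof (rule measurable_cong[THEN iffD1, rotated])
    show "(\<lambda>_. 1::ennreal) \<in> borel_measurable M" by simp
  qed (simp add: eq)
qed

lemma rand_law_kernel:
  assumes sa: "sets \<alpha> = sets site_M"
  shows "(\<lambda>\<omega>. rand_law \<omega>) \<in> measurable (env_law \<alpha>) (subprob_algebra RR)"
proof -
  have c: "(\<lambda>\<omega>. \<omega> y) \<in> measurable (env_law \<alpha>) (offspring_M \<Otimes>\<^sub>M borel)" for y
    unfolding env_law_def measurable_cong_sets[OF refl sa[symmetric, unfolded site_M_def]] by measurable
  have f: "(\<lambda>\<omega>. fst (\<omega> y)) \<in> measurable (env_law \<alpha>) offspring_M" for y
    using measurable_compose[OF c measurable_fst] by simp
  have s: "(\<lambda>\<omega>. snd (\<omega> y)) \<in> measurable (env_law \<alpha>) borel" for y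
    using measurable_compose[OF c measurable_snd] by simp
  have k1: "(\<lambda>\<omega>. measure_pmf (fst (\<omega> y))) \<in> measurable (env_law \<alpha>) (subprob_algebra (count_space UNIV))" for y
    by (rule measurable_compose[OF f KP])
  have k2: "(\<lambda>\<omega>. measure_pmf (bernoulli_pmf (snd (\<omega> y)))) \<in> measurable (env_law \<alpha>) (subprob_algebra (count_space UNIV))" for y
    by (rule measurable_compose[OF s KB])
  show ?thesis
    unfolding rand_law_def
    by (intro measurable_pair_measure PiM_kernel k1 k2) (auto intro: prob_space_measure_pmf)
qed



lemma space_env:
  assumes sa: "sets \<alpha> = sets site_M"
  shows "space (env_law \<alpha>) = UNIV"
proof -
  have "space \<alpha> = space site_M" by (rule sets_eq_imp_space_eq[OF sa])
  also have "\<dots> = UNIV" by (simp add: site_M_def offspring_M_def space_pair_measure)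
  finally show ?thesis by (simp add: env_law_def space_PiM)
qed

lemma shenv_meas:
  "shenv x \<in> measurable (env_law \<alpha>) (env_law \<alpha>)"
  unfolding env_law_def shenv_def
  by (rule measurable_PiM_single'[where f="\<lambda>i \<omega>. \<omega> (i + x)"]) (auto simp: space_PiM)

lemma distr_shenv:
  assumes pa: "prob_space \<alpha>"
  shows "distr (env_law \<alpha>) (env_law \<alpha>) (shenv x) = env_law \<alpha>"
proof -
  have inj: "inj_on (\<lambda>n::nat. n + x) UNIV" by (auto simp: inj_on_def)
  have "distr (Pi\<^sub>M UNIV (\<lambda>_::nat. \<alpha>)) (\<Pi>\<^sub>M i\<in>UNIV. (\<lambda>_::nat. \<alpha>) (i + x)) (\<lambda>\<omega>. \<lambda>n\<in>UNIV. \<omega> (n + x))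
     = (\<Pi>\<^sub>M i\<in>UNIV. (\<lambda>_::nat. \<alpha>) (i + x))"
    by (rule distr_PiM_reindex[OF _ inj]) (auto simp: pa)
  moreover have "(\<lambda>\<omega>. \<lambda>n\<in>UNIV. \<omega> (n + x)) = shenv x" by (auto simp: shenv_def fun_eq_iff)
  ultimately show ?thesis by (simp add: env_law_def)
qed

lemma shenv_shenv: "shenv x (shenv n \<omega>) = shenv (x + n) \<omega>"
  by (simp add: shenv_def add.assoc)

lemma ergodic:
  fixes g :: "(nat \<Rightarrow> site_env) \<Rightarrow> real"
  assumes pa: "prob_space \<alpha>" and sa: "sets \<alpha> = sets site_M"
    and gm: "g \<in> borel_measurable (env_law \<alpha>)"
    and pos: "AE \<omega> in env_law \<alpha>. g \<omega> > 0"
  shows "\<exists>\<nu>>0. AE \<omega> in env_law \<alpha>. \<exists>x :: nat \<Rightarrow> nat. strict_mono x \<and> (\<forall>l. g (shenv (x l) \<omega>) > \<nu>)"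
proof -
  let ?P = "env_law \<alpha>"
  interpret P: prob_space ?P unfolding env_law_def by (rule prob_space_PiM) (rule pa)
  have sp: "space ?P = UNIV" by (rule space_env[OF sa])
  have "\<exists>k::nat. \<not> (AE \<omega> in ?P. g \<omega> \<le> 1 / Suc k)"
  proof (rule ccontr)
    assume "\<not> ?thesis"
    then have "\<forall>k::nat. AE \<omega> in ?P. g \<omega> \<le> 1 / Suc k" by blast
    then have "AE \<omega> in ?P. \<forall>k::nat. g \<omega> \<le> 1 / Suc k" by (simp add: AE_all_countable)
    with pos have "AE \<omega> in ?P. False"
    proof eventually_elim
      case (elim \<omega>)
      obtain k :: nat where "1 / Suc k < g \<omega>"
        using reals_Archimedean[OF elim(1)] by (auto simp: inverse_eq_divide)
      with elim(2) show False by (meson not_le)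
    qed
    then show False by (simp add: P.AE_False)
  qed
  then obtain k :: nat where k: "\<not> (AE \<omega> in ?P. g \<omega> \<le> 1 / Suc k)" by blast
  define \<nu> where "\<nu> = 1 / real (Suc k)"
  have \<nu>pos: "\<nu> > 0" by (simp add: \<nu>_def)
  define G where "G = {\<omega> \<in> space ?P. g \<omega> > \<nu>}"
  have Gs: "G \<in> sets ?P" unfolding G_def using gm by measurable
  have "emeasure ?P G \<noteq> 0"
  proof
    assume "emeasure ?P G = 0"
    then have "AE \<omega> in ?P. g \<omega> \<le> \<nu>"
      by (subst AE_iff_measurable[OF Gs]) (auto simp: G_def not_le)
    with k show False by (simp add: \<nu>_def)
  qed
  then have ppos: "P.prob G > 0"
    by (simp add: P.emeasure_eq_measure zero_less_measure_iff)
  define A where "A x = {\<omega> \<in> space ?P. g (shenv x \<omega>) > \<nu>}" for x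
  have As: "A x \<in> sets ?P" for x
  proof -
    have "(\<lambda>\<omega>. g (shenv x \<omega>)) \<in> borel_measurable ?P"
      by (rule measurable_compose[OF shenv_meas gm])
    then show ?thesis unfolding A_def by measurable
  qed
  have pA: "P.prob (A x) = P.prob G" for x
  proof -
    have "A x = shenv x -` G \<inter> space ?P" by (auto simp: A_def G_def sp)
    then have "P.prob (A x) = measure (distr ?P ?P (shenv x)) G"
      by (simp add: measure_distr[OF shenv_meas Gs])
    then show ?thesis by (simp add: distr_shenv[OF pa])
  qed
  define Bn where "Bn n = (\<Union>x\<in>{n..}. A x)" for n
  define B where "B = (\<Inter>n. Bn n)"
  have Bns: "Bn n \<in> sets ?P" for n unfolding Bn_def using As by auto
  have dec: "decseq Bn" unfolding Bn_def decseq_def by (auto intro: order_trans)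
  have lim: "(\<lambda>n. P.prob (Bn n)) \<longlonglongrightarrow> P.prob B"
    unfolding B_def by (rule P.finite_Lim_measure_decseq) (use Bns dec in auto)
  have "P.prob (A n) \<le> P.prob (Bn n)" for n
    by (rule P.finite_measure_mono[OF _ Bns]) (auto simp: Bn_def)
  then have "P.prob G \<le> P.prob B"
    by (intro LIMSEQ_le_const[OF lim]) (auto simp: pA)
  with ppos have Bpos: "P.prob B > 0" by simp
  define Sg where "Sg i = sigma_sets (space ?P) {(\<lambda>\<omega>. \<omega> i) -` S \<inter> space ?P | S. S \<in> sets \<alpha>}" for i :: nat
  have indepv: "P.indep_vars (\<lambda>_. \<alpha>) (\<lambda>i \<omega>. \<omega> i) UNIV"
  proof (subst P.indep_vars_iff_distr_eq_PiM')
    show "\<And>i. i \<in> UNIV \<Longrightarrow> (\<lambda>\<omega>. \<omega> i) \<in> measurable ?P \<alpha>"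
      unfolding env_law_def by (rule measurable_component_singleton) simp
    have "distr ?P (Pi\<^sub>M UNIV (\<lambda>_. \<alpha>)) (\<lambda>x. \<lambda>i\<in>UNIV. x i) = ?P"
      by (simp add: restrict_UNIV env_law_def)
    moreover have "(\<Pi>\<^sub>M i\<in>UNIV. distr ?P \<alpha> (\<lambda>\<omega>. \<omega> i)) = ?P"
      unfolding env_law_def by (rule PiM_cong) (auto intro!: distr_PiM_component pa)
    ultimately show "distr ?P (Pi\<^sub>M UNIV (\<lambda>_. \<alpha>)) (\<lambda>x. \<lambda>i\<in>UNIV. x i) = (\<Pi>\<^sub>M i\<in>UNIV. distr ?P \<alpha> (\<lambda>\<omega>. \<omega> i))"
      by (simp add: env_law_def)
  qed (simp_all add: env_law_def measurable_component_singleton)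
  have indep: "P.indep_sets Sg UNIV"
    using indepv unfolding P.indep_vars_def Sg_def by simp
  have sigSg: "sigma_algebra (space ?P) (Sg i)" for i
    unfolding Sg_def by (rule sigma_algebra_sigma_sets) auto
  have tail: "B \<in> P.tail_events Sg"
    unfolding P.tail_events_def
  proof
    fix n :: nat
    let ?Gen = "\<Union> (Sg ` {n..})"
    have genP: "?Gen \<subseteq> Pow (space ?P)"
    proof -
      have "Sg i \<subseteq> Pow (space ?P)" for i
        by (simp add: sp)
      then show ?thesis by auto
    qed
    define Mn where "Mn = sigma (space ?P) ?Gen"
    have sMn: "sets Mn = sigma_sets (space ?P) ?Gen" unfolding Mn_def using genP by simp
    have spMn: "space Mn = space ?P" unfolding Mn_def using genP by simp
    have m: "shenv n \<in> measurable Mn ?P"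
      unfolding env_law_def shenv_def
    proof (rule measurable_PiM_single)
      show "(\<lambda>\<omega> na. \<omega> (na + n)) \<in> space Mn \<rightarrow> (\<Pi>\<^sub>E i\<in>UNIV. space \<alpha>)"
        using spMn sp by (auto simp: env_law_def space_PiM)
    next
      fix S i assume S: "S \<in> sets \<alpha>"
      have "{\<omega> \<in> space Mn. \<omega> (i + n) \<in> S} = (\<lambda>\<omega>. \<omega> (i + n)) -` S \<inter> space ?P"
        using spMn by auto
      also have "\<dots> \<in> Sg (i + n)" unfolding Sg_def using S by (intro sigma_sets.Basic) blast
      also have "Sg (i + n) \<subseteq> sets Mn" unfolding sMn
        by (intro subsetI sigma_sets.Basic) auto
      finally show "{\<omega> \<in> space Mn. \<omega> (i + n) \<in> S} \<in> sets Mn" .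
    qed
    have Bs: "B \<in> sets ?P" unfolding B_def using Bns by auto
    have "B = shenv n -` B \<inter> space Mn"
    proof -
      have "\<omega> \<in> B \<longleftrightarrow> shenv n \<omega> \<in> B" for \<omega>
      proof -
        have "\<omega> \<in> B \<longleftrightarrow> (\<forall>m. \<exists>x\<ge>m. g (shenv x \<omega>) > \<nu>)"
          by (auto simp: B_def Bn_def A_def sp)
        moreover have "shenv n \<omega> \<in> B \<longleftrightarrow> (\<forall>m. \<exists>x\<ge>m. g (shenv (x + n) \<omega>) > \<nu>)"
          by (auto simp: B_def Bn_def A_def sp shenv_shenv)
        moreover have "(\<forall>m. \<exists>x\<ge>m. g (shenv x \<omega>) > \<nu>) \<longleftrightarrow> (\<forall>m. \<exists>x\<ge>m. g (shenv (x + n) \<omega>) > \<nu>)"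
        proof
          assume H: "\<forall>m. \<exists>x\<ge>m. g (shenv x \<omega>) > \<nu>"
          show "\<forall>m. \<exists>x\<ge>m. g (shenv (x + n) \<omega>) > \<nu>"
          proof
            fix m
            obtain x where "x \<ge> m + n" "g (shenv x \<omega>) > \<nu>" using H by blast
            then show "\<exists>x\<ge>m. g (shenv (x + n) \<omega>) > \<nu>"
              by (intro exI[of _ "x - n"]) auto
          qed
        next
          assume H: "\<forall>m. \<exists>x\<ge>m. g (shenv (x + n) \<omega>) > \<nu>"
          show "\<forall>m. \<exists>x\<ge>m. g (shenv x \<omega>) > \<nu>"
          proof
            fix m
            obtain x where "x \<ge> m" "g (shenv (x + n) \<omega>) > \<nu>" using H by blast
            then show "\<exists>x\<ge>m. g (shenv x \<omega>) > \<nu>"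
              by (intro exI[of _ "x + n"]) auto
          qed
        qed
        ultimately show ?thesis by blast
      qed
      then show ?thesis using spMn sp by auto
    qed
    also have "\<dots> \<in> sets Mn" by (rule measurable_sets[OF m Bs])
    finally show "B \<in> sigma_sets (space ?P) ?Gen" using sMn by simp
  qed
  have "P.prob B = 0 \<or> P.prob B = 1"
    by (rule P.kolmogorov_0_1_law[OF sigSg indep tail])
  with Bpos have "P.prob B = 1" by simp
  then have AEB: "AE \<omega> in ?P. \<omega> \<in> B" by (rule P.AE_prob_1)
  have "AE \<omega> in ?P. \<exists>x :: nat \<Rightarrow> nat. strict_mono x \<and> (\<forall>l. g (shenv (x l) \<omega>) > \<nu>)"
    using AEB
  proof eventually_elim
    case (elim \<omega>)
    let ?X = "{x. g (shenv x \<omega>) > \<nu>}"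
    have "infinite ?X"
      using elim unfolding infinite_nat_iff_unbounded_le by (auto simp: B_def Bn_def A_def sp)
    then show ?case
      by (intro exI[of _ "enumerate ?X"]) (auto intro: strict_mono_enumerate dest: enumerate_in_set)
  qed
  then show ?thesis using \<nu>pos by blast
qed



theorem corollary1:
  fixes \<alpha> :: "site_env measure" and \<beta> :: "real \<Rightarrow> real"
    and \<delta> \<epsilon> :: real and r s N0 :: nat
  assumes "prob_space \<alpha>" and "sets \<alpha> = sets site_M"
    and "AE e in \<alpha>. 0 < snd e \<and> snd e \<le> 1"
    and "\<delta> > 0"
    and "measure \<alpha> {e \<in> space \<alpha>. pmf (fst e) 1 = 1} < 1"
    and "measure \<alpha> {e \<in> space \<alpha>. pmf (fst e) 0 \<le> 1 - \<delta> \<and> \<delta> \<le> snd e \<and> snd e \<le> 1 - \<delta>} = 1"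
    and "esssup \<alpha> (\<lambda>e. mean_off (fst e)) < \<infinity>"
    and "is_beta \<alpha> \<beta>"
    and "\<epsilon> > 0" and "1 \<le> r" and "r \<le> s" and "\<beta> (real r / real s) - \<epsilon> > 0"
    and "1 \<le> N0"
    and "AE \<omega> in env_law \<alpha>.
           qprob \<omega> 0 (\<lambda>\<eta>. liminf (\<lambda>n. lg (\<eta> (n * s * N0) (n * r * N0)) / ereal (real (n * s * N0)))
                           \<ge> ereal (\<beta> (real r / real s) - \<epsilon>)) > 0"
  shows "\<exists>\<nu>>0. AE \<omega> in env_law \<alpha>. \<exists>x :: nat \<Rightarrow> nat. strict_mono x \<and>
           (\<forall>l. qprob \<omega> (x l) (\<lambda>\<eta>. liminf (\<lambda>n. lg (\<eta> (n * s * N0) (x l + n * r * N0)) / ereal (real (n * s * N0)))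
                           \<ge> ereal (\<beta> (real r / real s) - \<epsilon>)) > \<nu>)"
proof -
  note pa = assms(1) and sa = assms(2) and hyp = assms(14)
  define c where "c = ereal (\<beta> (real r / real s) - \<epsilon>)"
  define Pc where "Pc = (\<lambda>sq :: nat \<Rightarrow> nat. c \<le> liminf (\<lambda>n. lg (sq n) / ereal (real (n * s * N0))))"
  define g where "g \<omega> = qprob \<omega> 0 (\<lambda>\<eta>. Pc (\<lambda>n. \<eta> (n * s * N0) (n * r * N0)))" for \<omega>
  define S0 where "S0 = {kb \<in> space RR. c \<le> liminf (\<lambda>n. lg (eta 0 kb (n * s * N0) (n * r * N0)) / ereal (real (n * s * N0)))}"
  have S0: "S0 \<in> sets RR" unfolding S0_def by (rule event_meas)
  have S0': "{kb \<in> space RR. Pc (\<lambda>n. eta 0 kb (n * s * N0) (n * r * N0))} \<in> sets RR"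
    using S0 by (simp add: S0_def Pc_def)
  have geq: "g \<omega> = measure (rand_law \<omega>) S0" for \<omega>
    by (simp add: g_def qprob_def S0_def Pc_def space_rand_law space_RR)
  have gm: "g \<in> borel_measurable (env_law \<alpha>)"
    unfolding geq[abs_def]
    by (rule measurable_compose[OF rand_law_kernel[OF sa] measurable_measure_subprob_algebra[OF S0]])
  have pos: "AE \<omega> in env_law \<alpha>. g \<omega> > 0"
    using hyp by (simp add: g_def Pc_def c_def)
  obtain \<nu> where \<nu>: "\<nu> > 0" and ae: "AE \<omega> in env_law \<alpha>. \<exists>x :: nat \<Rightarrow> nat. strict_mono x \<and> (\<forall>l. g (shenv (x l) \<omega>) > \<nu>)"
    using ergodic[OF pa sa gm pos] by blast
  have sh: "qprob \<omega> x (\<lambda>\<eta>. Pc (\<lambda>n. \<eta> (n * s * N0) (x + n * r * N0))) = g (shenv x \<omega>)" for \<omega> x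
    unfolding g_def
    by (rule qprob_shift[where P=Pc and a="\<lambda>n. n * s * N0" and b="\<lambda>n. n * r * N0", OF S0'])
  show ?thesis
  proof (intro exI[of _ \<nu>] conjI \<nu>)
    show "AE \<omega> in env_law \<alpha>. \<exists>x :: nat \<Rightarrow> nat. strict_mono x \<and>
           (\<forall>l. qprob \<omega> (x l) (\<lambda>\<eta>. liminf (\<lambda>n. lg (\<eta> (n * s * N0) (x l + n * r * N0)) / ereal (real (n * s * N0)))
                           \<ge> ereal (\<beta> (real r / real s) - \<epsilon>)) > \<nu>)"
      using ae
    proof eventually_elim
      case (elim \<omega>)
      then obtain x :: "nat \<Rightarrow> nat" where x: "strict_mono x" "\<And>l. g (shenv (x l) \<omega>) > \<nu>" by blast
      have "qprob \<omega> (x l) (\<lambda>\<eta>. liminf (\<lambda>n. lg (\<eta> (n * s * N0) (x l + n * r * N0)) / ereal (real (n * s * N0)))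
                           \<ge> ereal (\<beta> (real r / real s) - \<epsilon>)) > \<nu>" for l
        using sh[of \<omega> "x l"] x(2)[of l] by (simp add: Pc_def c_def)
      then show ?case using x(1) by blast
    qed
  qed
qed

end
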